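(* Let $n\in\mathbb{N}$ and for $c\in\mathbb{R}$ let \[ D_{2n}(z;c) = \prod_{j=1}^{2n}[z-(j-1)] + (-1)^n c, \quad z\in\mathbb{C}. \] Let $\alpha_1(c),\dots,\alpha_{2n}(c)$ be the roots of $D_{2n}(\cdot;c)$ (with multiplicity), labelled so that each $\alpha_j(c)$ is a continuous function of $c\in\mathbb{R}$ and $\Re(\alpha_1(c))\leq \cdots\leq\Re(\alpha_{2n}(c))$ for all $c\in\mathbb{R}$. Then for $j\in\{1,\dots,2n\}$, \[ \lim_{c\to+\infty}\Re(\alpha_j(c)) = \begin{cases} -\infty, & 1\leq j\leq n,\\ +\infty, & n+1\leq j\leq 2n,\end{cases} \] and \[ \lim_{c\to-\infty}\Re(\alpha_j(c)) = \begin{cases} -\infty, & 1\leq j\leq n-1,\\ n-(1/2), & n\leq j\leq n+1,\\ +\infty, & n+2\leq j\leq 2n.\end{cases} \] *)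

theory Defs
  imports "HOL-Analysis.Analysis" "HOL-Computational_Algebra.Computational_Algebra"
begin

definition Dpoly :: "nat \<Rightarrow> real \<Rightarrow> complex poly" where
  "Dpoly n c = (\<Prod>j\<in>{1..2*n}. [:- of_nat (j - 1), 1:]) + [:(-1) ^ n * complex_of_real c:]"

end

theory Submission
  imports Defs
begin
definition PP :: "nat \<Rightarrow> complex poly" where
  "PP n = (\<Prod>j\<in>{1..2*n}. [:- of_nat (j - 1), 1:])"

lemma prod_pair:
  fixes g :: "nat \<Rightarrow> 'a::comm_monoid_mult"
  shows "(\<Prod>j<2*n. g j) = (\<Prod>k<n. g k * g (2*n-1-k))"
proof -
  have "{..<2*n} = {..<n} \<union> {n..<2*n}" by auto
  hence "(\<Prod>j<2*n. g j) = (\<Prod>j<n. g j) * (\<Prod>j\<in>{n..<2*n}. g j)"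
    by (metis prod.union_disjoint finite_lessThan finite_atLeastLessThan ivl_disj_int_one(2) lessThan_atLeast0)
  also have "(\<Prod>j\<in>{n..<2*n}. g j) = (\<Prod>k<n. g (2*n-1-k))"
    by (rule prod.reindex_bij_witness[of _ "\<lambda>k. 2*n-1-k" "\<lambda>j. 2*n-1-j"]) auto
  finally show ?thesis by (simp add: prod.distrib)
qed

lemma poly_PP:
  "poly (PP n) z = (\<Prod>k<n. ((z - of_real (real n - 1/2))^2 - (of_real (real n - 1/2 - real k))^2))"
proof -
  have "poly (PP n) z = (\<Prod>j\<in>{1..2*n}. z - of_nat (j - 1))"
    by (auto simp: PP_def poly_prod of_nat_diff intro!: prod.cong)
  also have "\<dots> = (\<Prod>j<2*n. z - of_nat j)"
    by (rule prod.reindex_bij_witness[of _ Suc "\<lambda>j. j - 1"]) auto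
  also have "\<dots> = (\<Prod>k<n. (z - of_nat k) * (z - of_nat (2*n-1-k)))"
    by (rule prod_pair)
  also have "\<dots> = (\<Prod>k<n. ((z - of_real (real n - 1/2))^2 - (of_real (real n - 1/2 - real k))^2))"
  proof (rule prod.cong[OF refl])
    fix k assume "k \<in> {..<n}"
    hence h: "of_nat (2*n-1-k) = (2 * of_nat n - 1 - of_nat k :: complex)"
      by (simp add: of_nat_diff)
    show "(z - of_nat k) * (z - of_nat (2*n-1-k)) = ((z - of_real (real n - 1/2))^2 - (of_real (real n - 1/2 - real k))^2)"
      unfolding h by (simp add: power2_eq_square algebra_simps)
  qed
  finally show ?thesis .
qed

lemma poly_PP_orig: "poly (PP n) z = (\<Prod>j\<in>{1..2*n}. z - of_nat (j - 1))"
  by (auto simp: PP_def poly_prod of_nat_diff intro!: prod.cong)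

lemma Dpoly_PP: "Dpoly n c = PP n + [:(-1) ^ n * complex_of_real c:]"
  by (simp add: Dpoly_def PP_def)

lemma poly_Dpoly: "poly (Dpoly n c) z = poly (PP n) z + (-1) ^ n * complex_of_real c"
  by (simp add: Dpoly_PP)

lemma PP_nonconst:
  assumes "n \<ge> 1" shows "PP n \<noteq> [:h:]"
proof
  assume h: "PP n = [:h:]"
  have "poly (PP n) 0 = 0"
    unfolding poly_PP_orig using assms by (intro prod_zero) (auto intro!: bexI[of _ 1])
  moreover have "poly (PP n) (of_nat (2*n)) \<noteq> 0"
    unfolding poly_PP_orig
  proof (subst prod_zero_iff, simp, rule notI)
    assume "\<exists>j\<in>{1..2*n}. (of_nat (2*n) :: complex) - of_nat (j - 1) = 0"
    then obtain j where j: "j \<in> {1..2*n}" "(of_nat (2*n) :: complex) = of_nat (j - 1)" by auto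
    hence "2*n = j - 1" using of_nat_eq_iff by blast
    thus False using j(1) by auto
  qed
  ultimately show False using h by simp
qed

lemma Dpoly_ne0: assumes "n \<ge> 1" shows "Dpoly n c \<noteq> 0"
  unfolding Dpoly_PP
proof
  assume "PP n + [:(-1) ^ n * complex_of_real c:] = 0"
  hence "PP n = - [:(-1) ^ n * complex_of_real c:]" by (simp only: add_eq_0_iff2)
  thus False using PP_nonconst[OF assms, of "- ((-1) ^ n * complex_of_real c)"] by simp
qed

lemma pderiv_Dpoly: "pderiv (Dpoly n c) = pderiv (PP n)"
  by (simp add: Dpoly_PP pderiv_add pderiv_pCons)

lemma pderiv_PP_ne0: "n \<ge> 1 \<Longrightarrow> pderiv (PP n) \<noteq> 0"
  using PP_nonconst pderiv_iszero by blast

lemma bad_finite: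
  assumes "n \<ge> 1"
  shows "finite {c. \<exists>z. poly (Dpoly n c) z = 0 \<and> poly (pderiv (Dpoly n c)) z = 0}"
proof -
  have "{c. \<exists>z. poly (Dpoly n c) z = 0 \<and> poly (pderiv (Dpoly n c)) z = 0}
     \<subseteq> (\<lambda>z. Re (- ((-1) ^ n * poly (PP n) z))) ` {z. poly (pderiv (PP n)) z = 0}"
  proof
    fix c assume "c \<in> {c. \<exists>z. poly (Dpoly n c) z = 0 \<and> poly (pderiv (Dpoly n c)) z = 0}"
    then obtain z where z: "poly (PP n) z + (-1) ^ n * complex_of_real c = 0" "poly (pderiv (PP n)) z = 0"
      by (auto simp: poly_Dpoly pderiv_Dpoly)
    have s: "(-1) ^ n * ((-1) ^ n * complex_of_real c) = complex_of_real c"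
      by (simp flip: mult.assoc power_mult_distrib)
    have e: "(-1) ^ n * complex_of_real c = - poly (PP n) z"
      using z(1) by (simp only: add_eq_0_iff)
    have "complex_of_real c = - ((-1) ^ n * poly (PP n) z)"
      using s unfolding e by simp
    hence "c = Re (- ((-1) ^ n * poly (PP n) z))" by (simp only: Re_complex_of_real flip: \<open>complex_of_real c = _\<close>)
    thus "c \<in> (\<lambda>z. Re (- ((-1) ^ n * poly (PP n) z))) ` {z. poly (pderiv (PP n)) z = 0}"
      using z(2) by blast
  qed
  moreover have "finite {z. poly (pderiv (PP n)) z = 0}"
    by (rule poly_roots_finite) (rule pderiv_PP_ne0[OF assms])
  ultimately show ?thesis by (meson finite_imageI finite_subset)
qed

lemma pcompose_power: "pcompose (p ^ k) r = (pcompose p r) ^ k"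
  by (induction k) (simp_all add: pcompose_mult pcompose_1)

lemma order_reflect:
  fixes p :: "complex poly"
  assumes p: "pcompose p [:a, -1:] = p" "p \<noteq> 0"
  shows "order z p \<le> order (a - z) p"
proof -
  define k where "k = order z p"
  have "[:-z, 1:] ^ k dvd p" unfolding k_def by (rule order_1)
  then obtain q where q: "p = [:-z, 1:] ^ k * q" by (elim dvdE)
  have 0: "pcompose ([:-z, 1:] ^ k * q) [:a, -1:] = pcompose ([:-z, 1:] ^ k) [:a, -1:] * pcompose q [:a, -1:]"
    by (rule pcompose_mult)
  have 1: "p = pcompose ([:-z, 1:] ^ k) [:a, -1:] * pcompose q [:a, -1:]"
    using p(1) 0 unfolding q[symmetric] by simp
  have 2: "pcompose [:-z, 1:] [:a, -1:] = - [:-(a - z), 1:]"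
    by (simp add: pcompose_pCons)
  have "p = (- [:-(a - z), 1:]) ^ k * pcompose q [:a, -1:]"
    using 1 2 by (simp only: pcompose_power)
  also have "\<dots> = [:-(a - z), 1:] ^ k * ((-1) ^ k * pcompose q [:a, -1:])"
    by (subst power_minus) (simp only: ac_simps)
  finally have "[:-(a - z), 1:] ^ k dvd p"
    by (rule ssubst) (rule dvd_triv_left)
  hence "p = 0 \<or> k \<le> order (a - z) p" by (simp only: order_divides)
  thus ?thesis using p(2) unfolding k_def by blast
qed

lemma mset_reflect:
  fixes M :: "'a::ab_group_add multiset"
  assumes "\<And>z. count M z \<le> count M (a - z)"
  shows "image_mset (\<lambda>z. a - z) M = M"
proof (rule multiset_eqI)
  fix x
  have v: "(\<lambda>z. a - z) -` {x} = {a - x}" by auto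
  have "count (image_mset (\<lambda>z. a - z) M) x = count M (a - x)"
    unfolding count_image_mset v by (cases "a - x \<in># M") (auto simp: not_in_iff)
  moreover have "count M (a - x) \<le> count M x" using assms[of "a - x"] by simp
  moreover have "count M x \<le> count M (a - x)" using assms by simp
  ultimately show "count (image_mset (\<lambda>z. a - z) M) x = count M x" by simp
qed

lemma PP_sym: "poly (PP n) (of_real (2 * real n - 1) - z) = poly (PP n) z"
proof -
  have e: "of_real (2 * real n - 1) - z - of_real (real n - 1/2) = - (z - of_real (real n - 1/2))"
    by (simp add: algebra_simps)
  show ?thesis unfolding poly_PP e power2_minus by (rule refl)
qed

lemma Dpoly_sym: "pcompose (Dpoly n c) [:of_real (2 * real n - 1), -1:] = Dpoly n c"
proof -
  have "poly (pcompose (Dpoly n c) [:of_real (2 * real n - 1), -1:]) = poly (Dpoly n c)"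
  proof
    fix x :: complex
    have "poly [:of_real (2 * real n - 1), -1:] x = of_real (2 * real n - 1) - x" by simp
    thus "poly (pcompose (Dpoly n c) [:of_real (2 * real n - 1), -1:]) x = poly (Dpoly n c) x"
      by (simp only: poly_pcompose poly_Dpoly PP_sym)
  qed
  thus ?thesis by (simp only: poly_eq_poly_eq_iff)
qed

lemma proots_sym:
  assumes "n \<ge> 1"
  shows "image_mset (\<lambda>z. of_real (2 * real n - 1) - z) (proots (Dpoly n c)) = proots (Dpoly n c)"
proof (rule mset_reflect)
  fix z
  show "count (proots (Dpoly n c)) z \<le> count (proots (Dpoly n c)) (of_real (2 * real n - 1) - z)"
    using order_reflect[OF Dpoly_sym Dpoly_ne0[OF assms]] Dpoly_ne0[OF assms] by simp
qed

lemma sym_re: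
  fixes \<alpha> :: "nat \<Rightarrow> complex"
  assumes n1: "n \<ge> 1"
    and roots: "image_mset (\<lambda>j. \<alpha> j) (mset_set {1..2*n}) = proots (Dpoly n c)"
    and mono: "\<And>i j. 1 \<le> i \<Longrightarrow> i \<le> j \<Longrightarrow> j \<le> 2*n \<Longrightarrow> Re (\<alpha> i) \<le> Re (\<alpha> j)"
    and j: "1 \<le> j" "j \<le> 2*n"
  shows "Re (\<alpha> j) + Re (\<alpha> (2*n+1-j)) = 2*real n - 1"
proof -
  define a where "a = 2*real n - 1"
  define xs where "xs = map (\<lambda>j. Re (\<alpha> j)) [1..<Suc(2*n)]"
  define ys where "ys = rev (map (\<lambda>x. a - x) xs)"
  have lxs: "length xs = 2*n" by (simp add: xs_def del: upt_Suc)
  have nxs: "xs ! i = Re (\<alpha> (Suc i))" if "i < 2*n" for i using that by (simp add: xs_def del: upt_Suc)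
  have nys: "ys ! i = a - Re (\<alpha> (2*n - i))" if "i < 2*n" for i
    using that by (simp add: ys_def rev_nth lxs nxs Suc_diff_Suc)
  have mxs: "mset xs = image_mset Re (proots (Dpoly n c))"
    unfolding roots[symmetric] xs_def by (simp add: multiset.map_comp o_def atLeastLessThanSuc_atLeastAtMost del: upt_Suc)
  have "mset ys = image_mset (\<lambda>x. a - x) (image_mset Re (proots (Dpoly n c)))"
    by (simp add: ys_def mxs)
  also have "\<dots> = image_mset Re (image_mset (\<lambda>z. of_real a - z) (proots (Dpoly n c)))"
    by (simp add: multiset.map_comp o_def)
  also have "\<dots> = image_mset Re (proots (Dpoly n c))"
    unfolding a_def using proots_sym[OF n1, of c] by simp
  finally have mys: "mset ys = mset xs" using mxs by simp
  have sxs: "sorted xs"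
    unfolding sorted_iff_nth_mono lxs by (auto simp: nxs intro!: mono)
  have sys: "sorted ys"
    unfolding sorted_iff_nth_mono
    by (auto simp: ys_def lxs nys[unfolded ys_def] intro!: mono)
  have "xs = ys" using properties_for_sort[OF mys sys] sorted_sort_id[OF sxs] by simp
  hence "xs ! (j - 1) = ys ! (j - 1)" by simp
  thus ?thesis using j by (simp add: nxs nys a_def)
qed

lemma pow_bound:
  assumes "n \<ge> 1" "j \<le> n"
  shows "(1 + 1 / (2 * real n)) ^ j < 2"
proof -
  have t: "0 \<le> 1 / (2 * real n)" by simp
  have "(1 + 1 / (2 * real n)) ^ j \<le> (1 + 1 / (2 * real n)) ^ n"
    using assms(2) by (intro power_increasing) auto
  also have "\<dots> \<le> exp (1 / (2 * real n)) ^ n"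
    by (intro power_mono) (simp_all add: add_nonneg_nonneg)
  also have "\<dots> = exp (real n * (1 / (2 * real n)))"
    by (simp only: exp_of_nat_mult)
  also have "real n * (1 / (2 * real n)) = 1/2" using assms(1) by simp
  also have "exp (1/2 :: real) < 2"
  proof (rule ccontr)
    assume "\<not> exp (1/2 :: real) < 2"
    hence "2 * 2 \<le> exp (1/2 :: real) * exp (1/2)" by (intro mult_mono) auto
    also have "\<dots> = exp 1" by (simp flip: exp_add)
    finally show False using exp_le by simp
  qed
  finally show ?thesis .
qed

lemma im_prod:
  fixes s :: "nat \<Rightarrow> real" and \<sigma> :: real
  assumes re: "\<And>j. j \<le> n \<Longrightarrow> Re (\<Prod>k<j. 1 - \<i> * of_real (s k)) > 0"
   and sg: "\<And>k. k < n \<Longrightarrow> \<sigma> * s k > 0"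
  shows "j \<le> n \<Longrightarrow> \<sigma> * Im (\<Prod>k<j. 1 - \<i> * of_real (s k)) \<le> 0 \<and> (0 < j \<longrightarrow> \<sigma> * Im (\<Prod>k<j. 1 - \<i> * of_real (s k)) < 0)"
proof (induction j)
  case 0 thus ?case by simp
next
  case (Suc j)
  define q where "q = (\<Prod>k<j. 1 - \<i> * of_real (s k))"
  have IH: "\<sigma> * Im q \<le> 0" using Suc unfolding q_def by simp
  have rq: "Re q > 0" using re[of j] Suc.prems unfolding q_def by simp
  have "\<sigma> * Im (\<Prod>k<Suc j. 1 - \<i> * of_real (s k)) = \<sigma> * Im q - (\<sigma> * s j) * Re q"
    by (simp add: q_def algebra_simps)
  also have "(\<sigma> * s j) * Re q > 0" using sg[of j] Suc.prems rq by simp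
  hence "\<sigma> * Im q - (\<sigma> * s j) * Re q < 0" using IH by simp
  finally show ?case by simp
qed

lemma strip:
  assumes n1: "n \<ge> 1" and M: "M > 0"
  shows "\<exists>K>0. \<forall>c z. K \<le> \<bar>c\<bar> \<longrightarrow> poly (Dpoly n c) z = 0 \<longrightarrow> \<bar>Re z - (real n - 1/2)\<bar> \<le> M
           \<longrightarrow> c < 0 \<and> Re z = real n - 1/2"
proof -
  define m where "m = real n - 1/2"
  define b where "b = (\<lambda>k::nat. real n - 1/2 - real k)"
  define Y where "Y = 4 * real n * M + M + 1"
  define K where "K = ((M + Y)^2 + m^2)^n + 1"
  have m_pos: "m > 0" using n1 by (simp add: m_def)
  have b_bounds: "0 < b k \<and> b k \<le> m" if "k < n" for k
    using that by (simp add: b_def m_def)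
  have Kpos: "K > 0" unfolding K_def by (simp add: add_nonneg_pos)
  have M4: "0 \<le> 4 * real n * M" using M by simp
  have Ypos: "Y \<ge> 4 * real n * M + M" "Y > M" using M4 M unfolding Y_def by linarith+
  show ?thesis
  proof (intro exI[of _ K] conjI allI impI)
    show "K > 0" by fact
    fix c z assume hc: "K \<le> \<bar>c\<bar>" and hz: "poly (Dpoly n c) z = 0"
      and hx: "\<bar>Re z - (real n - 1/2)\<bar> \<le> M"
    define w where "w = z - of_real m"
    define x where "x = Re w"
    define y where "y = Im w"
    have w: "w = Complex x y" by (simp add: x_def y_def)
    have xM: "\<bar>x\<bar> \<le> M" using hx by (simp add: x_def w_def m_def)
    have Pw: "poly (PP n) z = (\<Prod>k<n. w^2 - (of_real (b k))^2)"
      by (simp add: poly_PP w_def m_def b_def)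
    have Pc: "poly (PP n) z = - ((-1)^n * of_real c)"
      using hz by (simp add: poly_Dpoly add_eq_0_iff2)
    have normP: "norm (poly (PP n) z) = \<bar>c\<bar>" using Pc by (simp add: norm_mult norm_power)
    have yY: "\<bar>y\<bar> > Y"
    proof (rule ccontr)
      assume "\<not> \<bar>y\<bar> > Y" hence yY: "\<bar>y\<bar> \<le> Y" by simp
      have nw: "norm w \<le> M + Y" using cmod_le[of w] xM yY by (simp add: x_def y_def)
      have "norm (poly (PP n) z) \<le> (\<Prod>k<n. norm (w^2 - (of_real (b k))^2))"
        unfolding Pw by (rule norm_prod_le)
      also have "\<dots> \<le> (\<Prod>k<n. (M + Y)^2 + m^2)"
      proof (rule prod_mono, intro conjI)
        fix k assume k: "k \<in> {..<n}"
        show "0 \<le> norm (w^2 - (of_real (b k))^2)" by simp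
        have "norm (w^2 - (of_real (b k))^2) \<le> norm (w^2) + norm ((of_real (b k))^2 :: complex)"
          by (rule norm_triangle_ineq4)
        also have "\<dots> = norm w ^ 2 + (b k)^2" by (simp add: norm_power)
        also have "\<dots> \<le> (M+Y)^2 + m^2" using nw b_bounds[of k] k
          by (intro add_mono power_mono) auto
        finally show "norm (w^2 - (of_real (b k))^2) \<le> (M + Y)^2 + m^2" .
      qed
      also have "\<dots> = K - 1" by (simp add: K_def)
      finally show False using normP hc by simp
    qed
    have axy: "\<bar>x\<bar> < \<bar>y\<bar>" using xM yY Ypos by simp
    have x2y2: "x^2 < y^2"
      using power_strict_mono[OF axy, of 2] by simp
    define \<beta> where "\<beta> = (\<lambda>k. y^2 + (b k)^2 - x^2)"
    have \<beta>pos: "\<beta> k > 0" for k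
    proof -
      have "0 \<le> (b k)^2" by simp
      thus ?thesis using x2y2 unfolding \<beta>_def by linarith
    qed
    have \<beta>ge: "\<beta> k \<ge> y^2 - x^2" for k unfolding \<beta>_def by simp
    define s where "s = (\<lambda>k. 2 * x * y / \<beta> k)"
    have fac: "w^2 - (of_real (b k))^2 = of_real (- \<beta> k) * (1 - \<i> * of_real (s k))" for k
      using \<beta>pos[of k]
      by (simp add: w \<beta>_def s_def complex_eq_iff power2_eq_square field_simps)
    define q where "q = (\<lambda>j. \<Prod>k<j. 1 - \<i> * of_real (s k))"
    define B where "B = (\<Prod>k<n. \<beta> k)"
    have Bpos: "B > 0" unfolding B_def using \<beta>pos by (simp add: prod_pos)
    have "(\<Prod>k<n. complex_of_real (- \<beta> k)) = of_real (\<Prod>k<n. - \<beta> k)" by simp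
    also have "(\<Prod>k<n. - \<beta> k) = (-1)^n * B" by (simp add: prod_uminus B_def)
    finally have pb: "(\<Prod>k<n. complex_of_real (- \<beta> k)) = (-1)^n * of_real B" by simp
    have Pq: "poly (PP n) z = (-1)^n * of_real B * q n"
      unfolding Pw fac q_def prod.distrib pb by simp
    have sbound: "norm (- \<i> * complex_of_real (s k)) \<le> 1 / (2 * real n)" if k: "k < n" for k
    proof -
      have t1: "y^2 \<ge> 4 * real n * M * \<bar>y\<bar> + M * \<bar>y\<bar>"
      proof -
        have "y^2 = \<bar>y\<bar> * \<bar>y\<bar>" by (simp add: power2_eq_square)
        also have "\<bar>y\<bar> * \<bar>y\<bar> \<ge> \<bar>y\<bar> * (4 * real n * M + M)"
          using yY Ypos by (intro mult_left_mono) auto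
        finally show ?thesis by (simp add: algebra_simps)
      qed
      have t2: "M * \<bar>y\<bar> \<ge> x^2"
      proof -
        have "x^2 = \<bar>x\<bar> * \<bar>x\<bar>" by (simp add: power2_eq_square)
        also have "\<dots> \<le> M * \<bar>y\<bar>" using xM axy by (intro mult_mono) auto
        finally show ?thesis .
      qed
      have t3: "4 * real n * \<bar>x\<bar> * \<bar>y\<bar> \<le> 4 * real n * M * \<bar>y\<bar>"
        using xM by (intro mult_right_mono mult_left_mono) auto
      have key: "2 * \<bar>x\<bar> * \<bar>y\<bar> * (2 * real n) \<le> \<beta> k"
        using t1 t2 t3 \<beta>ge[of k] by (simp add: algebra_simps)
      have "norm (- \<i> * complex_of_real (s k)) = \<bar>s k\<bar>" by (simp add: norm_mult)
      also have "\<bar>s k\<bar> = 2 * \<bar>x\<bar> * \<bar>y\<bar> / \<beta> k" using \<beta>pos[of k] by (simp add: s_def abs_mult)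
      also have "\<dots> \<le> 1 / (2 * real n)" using key \<beta>pos[of k] n1
        by (simp add: divide_simps)
      finally show ?thesis .
    qed
    have req: "Re (q j) > 0" if j: "j \<le> n" for j
    proof -
      have qj: "q j = (\<Prod>k<j. 1 + (- \<i> * complex_of_real (s k)))" by (simp add: q_def)
      have "norm (q j - 1) \<le> (\<Prod>k<j. 1 + norm (- \<i> * complex_of_real (s k))) - 1"
        unfolding qj by (rule norm_prod_minus1_le_prod_minus1)
      also have "(\<Prod>k<j. 1 + norm (- \<i> * complex_of_real (s k))) \<le> (\<Prod>k<j. 1 + 1 / (2 * real n))"
        using sbound j by (intro prod_mono) auto
      also have "\<dots> = (1 + 1 / (2 * real n)) ^ j" by simp
      finally have "norm (q j - 1) < 1" using pow_bound[OF n1 j] by simp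
      moreover have "Re (q j) \<ge> 1 - norm (q j - 1)"
        using abs_Re_le_cmod[of "q j - 1"] by simp
      ultimately show ?thesis by simp
    qed
    have "(-1)^n * (of_real B * q n) = (-1)^n * (- complex_of_real c)"
      using Pq Pc by (simp add: mult.assoc)
    moreover have s0: "(-1::complex)^n \<noteq> 0" by simp
    ultimately have eq: "of_real B * q n = - complex_of_real c" using mult_left_cancel[OF s0] by blast
    have reeq: "B * Re (q n) = - c" using arg_cong[OF eq, of Re] by simp
    have imeq: "B * Im (q n) = 0" using arg_cong[OF eq, of Im] by simp
    show "c < 0" using reeq Bpos req[of n] by (metis mult_pos_pos neg_0_less_iff_less order_refl)
    have x0: "x = 0"
    proof (rule ccontr)
      assume "x \<noteq> 0"
      moreover have "y \<noteq> 0" using yY Ypos M by auto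
      ultimately have xy: "(x * y)^2 > 0" by simp
      have sg: "x * y * s k > 0" if "k < n" for k
      proof -
        have "x * y * s k = 2 * (x * y)^2 / \<beta> k" by (simp add: s_def power2_eq_square)
        thus ?thesis using xy \<beta>pos[of k] by simp
      qed
      have "x * y * Im (q n) < 0"
        using im_prod[of n s "x * y", OF _ sg, of n] req n1 unfolding q_def by auto
      thus False using imeq Bpos by simp
    qed
    thus "Re z = real n - 1/2" by (simp add: x_def w_def m_def)
  qed
qed

definition QQ :: "nat \<Rightarrow> real \<Rightarrow> real" where
  "QQ n t = (\<Prod>k<n. t^2 + (real n - 1/2 - real k)^2)"

lemma poly_line:
  "poly (Dpoly n c) (Complex (real n - 1/2) t) = (-1)^n * complex_of_real (QQ n t + c)"
proof -
  have w: "Complex (real n - 1/2) t - of_real (real n - 1/2) = \<i> * of_real t"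
    by (simp add: complex_eq_iff)
  have "poly (PP n) (Complex (real n - 1/2) t) = (\<Prod>k<n. - complex_of_real (t^2 + (real n - 1/2 - real k)^2))"
    unfolding poly_PP w by (intro prod.cong refl) (simp add: power_mult_distrib)
  also have "\<dots> = (-1)^n * (\<Prod>k<n. complex_of_real (t^2 + (real n - 1/2 - real k)^2))"
    by (simp only: prod_uminus card_lessThan)
  also have "\<dots> = (-1)^n * of_real (QQ n t)" by (simp add: QQ_def)
  finally show ?thesis by (simp add: poly_Dpoly algebra_simps)
qed

lemma root_line_iff:
  assumes "Re z = real n - 1/2"
  shows "poly (Dpoly n c) z = 0 \<longleftrightarrow> QQ n (Im z) = - c"
proof -
  have z: "z = Complex (real n - 1/2) (Im z)" using assms by (simp add: complex_eq_iff)
  show ?thesis by (subst z, subst poly_line) (simp add: add_eq_0_iff2)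
qed

lemma bsq_pos: "i < n \<Longrightarrow> 0 < (real n - 1/2 - real i)^2"
proof -
  assume "i < n" hence "real i + 1 \<le> real n" by linarith
  hence "real n - 1/2 - real i > 0" by linarith
  thus ?thesis by simp
qed

lemma QQ_strict:
  assumes "n \<ge> 1" "t1^2 < t2^2"
  shows "QQ n t1 < QQ n t2"
  unfolding QQ_def
proof (rule prod_mono_strict[of 0])
  show "0 \<in> {..<n}" using assms by simp
qed (use assms bsq_pos in \<open>auto intro: add_nonneg_pos\<close>)

lemma QQ_inj:
  assumes "n \<ge> 1" "QQ n t1 = QQ n t2" shows "t1^2 = t2^2"
  using QQ_strict[OF assms(1), of t1 t2] QQ_strict[OF assms(1), of t2 t1] assms(2)
  by (cases "t1^2 < t2^2"; cases "t2^2 < t1^2") auto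

lemma three_line:
  assumes n1: "n \<ge> 1"
    and r: "\<And>z. z \<in> {z1, z2, z3} \<Longrightarrow> Re z = real n - 1/2 \<and> poly (Dpoly n c) z = 0"
    and d: "z1 \<noteq> z2" "z1 \<noteq> z3" "z2 \<noteq> z3"
  shows False
proof -
  have q: "QQ n (Im z) = - c" if "z \<in> {z1, z2, z3}" for z using r[OF that] root_line_iff by blast
  have e12: "(Im z1)^2 = (Im z2)^2" using q[of z1] q[of z2] QQ_inj[OF n1] by simp
  have e13: "(Im z1)^2 = (Im z3)^2" using q[of z1] q[of z3] QQ_inj[OF n1] by simp
  have re: "Re z1 = Re z2" "Re z1 = Re z3" using r[of z1] r[of z2] r[of z3] by auto
  have "Im z1 \<noteq> Im z2" "Im z1 \<noteq> Im z3" "Im z2 \<noteq> Im z3" using d re by (auto simp: complex_eq_iff)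
  thus False using e12 e13 by (auto simp: power2_eq_iff)
qed

lemma line_root_exists:
  assumes n1: "n \<ge> 1" and c: "c \<le> - QQ n 0"
  shows "\<exists>z. Re z = real n - 1/2 \<and> poly (Dpoly n c) z = 0"
proof -
  define T where "T = 1 - c"
  have Q0: "QQ n 0 \<ge> 0" unfolding QQ_def by (intro prod_nonneg) auto
  have T1: "T \<ge> 1" using c Q0 by (simp add: T_def)
  have "QQ n T \<ge> (\<Prod>k<n. T^2)" unfolding QQ_def by (intro prod_mono) auto
  also have "(\<Prod>k<n. T^2) = T ^ (2*n)" by (simp add: power_mult)
  also have "T ^ (2*n) \<ge> T ^ 1" using T1 n1 by (intro power_increasing) auto
  finally have QT: "QQ n T \<ge> - c" using T_def by simp
  have "continuous_on {0..T} (QQ n)" unfolding QQ_def by (intro continuous_intros)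
  then obtain t where "QQ n t = - c" using IVT'[of "QQ n" 0 "-c" T] c QT T1 by auto
  thus ?thesis using root_line_iff[of "Complex (real n - 1/2) t" n c] by (intro exI[of _ "Complex (real n - 1/2) t"]) simp
qed

lemma distinct_generic:
  fixes \<alpha> :: "nat \<Rightarrow> complex"
  assumes n1: "n \<ge> 1"
    and roots: "image_mset (\<lambda>j. \<alpha> j) (mset_set {1..2*n}) = proots (Dpoly n c)"
    and good: "\<not> (\<exists>z. poly (Dpoly n c) z = 0 \<and> poly (pderiv (Dpoly n c)) z = 0)"
    and ij: "i \<in> {1..2*n}" "j \<in> {1..2*n}" "i \<noteq> j"
  shows "\<alpha> i \<noteq> \<alpha> j"
proof
  assume eq: "\<alpha> i = \<alpha> j"
  have "rsquarefree (Dpoly n c)" using good by (simp add: rsquarefree_roots)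
  hence le1: "count (proots (Dpoly n c)) z \<le> 1" for z
  proof -
    have "order z (Dpoly n c) = 0 \<or> order z (Dpoly n c) = 1"
      using \<open>rsquarefree (Dpoly n c)\<close> by (simp add: rsquarefree_def)
    thus ?thesis using Dpoly_ne0[OF n1, of c] by auto
  qed
  have "mset_set {1..2*n} = add_mset i (add_mset j (mset_set ({1..2*n} - {i} - {j})))"
    using ij by (simp add: mset_set.remove[symmetric])
  hence "count (image_mset (\<lambda>j. \<alpha> j) (mset_set {1..2*n})) (\<alpha> i) \<ge> 2"
    using eq by simp
  thus False using le1[of "\<alpha> i"] roots by simp
qed

lemma generic_exists:
  assumes "finite (B :: real set)"
  shows "\<exists>c. c \<le> - K \<and> c \<notin> B"
proof -
  define c where "c = - \<bar>K\<bar> - 1 - (\<Sum>b\<in>B. \<bar>b\<bar>)"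
  have "c \<notin> B"
  proof
    assume "c \<in> B"
    hence "\<bar>c\<bar> \<le> (\<Sum>b\<in>B. \<bar>b\<bar>)" using assms by (intro member_le_sum) auto
    moreover have "(\<Sum>b\<in>B. \<bar>b\<bar>) \<ge> 0" by (intro sum_nonneg) auto
    ultimately show False unfolding c_def by linarith
  qed
  moreover have "c \<le> - K"
  proof -
    have "(\<Sum>b\<in>B. \<bar>b\<bar>) \<ge> 0" by (intro sum_nonneg) auto
    moreover have "K \<le> \<bar>K\<bar>" by simp
    ultimately show ?thesis unfolding c_def by linarith
  qed
  ultimately show ?thesis by blast
qed

theorem lemma4p4:
  fixes n :: nat and \<alpha> :: "nat \<Rightarrow> real \<Rightarrow> complex"
  assumes roots: "\<And>c. image_mset (\<lambda>j. \<alpha> j c) (mset_set {1..2*n}) = proots (Dpoly n c)"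
    and cont: "\<And>j. j \<in> {1..2*n} \<Longrightarrow> continuous_on UNIV (\<alpha> j)"
    and ord: "\<And>c j. 1 \<le> j \<Longrightarrow> j < 2*n \<Longrightarrow> Re (\<alpha> j c) \<le> Re (\<alpha> (Suc j) c)"
  shows "(\<forall>j\<in>{1..n}. filterlim (\<lambda>c. Re (\<alpha> j c)) at_bot at_top) \<and>
      (\<forall>j\<in>{n+1..2*n}. filterlim (\<lambda>c. Re (\<alpha> j c)) at_top at_top) \<and>
      (\<forall>j\<in>{1..n-1}. filterlim (\<lambda>c. Re (\<alpha> j c)) at_bot at_bot) \<and>
      (\<forall>j\<in>{n..n+1}. 1 \<le> j \<and> j \<le> 2*n \<longrightarrow> ((\<lambda>c. Re (\<alpha> j c)) \<longlongrightarrow> real n - 1/2) at_bot) \<and>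
      (\<forall>j\<in>{n+2..2*n}. filterlim (\<lambda>c. Re (\<alpha> j c)) at_top at_bot)"
proof (cases "n = 0")
  case True thus ?thesis by simp
next
  case False
  hence n1: "n \<ge> 1" by simp
  define m where "m = real n - 1/2"
  have mono: "Re (\<alpha> i c) \<le> Re (\<alpha> j c)" if "1 \<le> i" "i \<le> j" "j \<le> 2*n" for i j c
  proof -
    have "\<forall>j. i \<le> j \<longrightarrow> j \<le> 2*n \<longrightarrow> Re (\<alpha> i c) \<le> Re (\<alpha> j c)"
    proof
      fix j show "i \<le> j \<longrightarrow> j \<le> 2*n \<longrightarrow> Re (\<alpha> i c) \<le> Re (\<alpha> j c)"
      proof (induction j)
        case 0 thus ?case using that by simp
      next
        case (Suc j)
        show ?case
        proof (intro impI)
          assume a: "i \<le> Suc j" "Suc j \<le> 2*n"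
          show "Re (\<alpha> i c) \<le> Re (\<alpha> (Suc j) c)"
          proof (cases "i = Suc j")
            case True thus ?thesis by simp
          next
            case False
            hence "i \<le> j" using a by simp
            hence "Re (\<alpha> i c) \<le> Re (\<alpha> j c)" using Suc a by simp
            also have "\<dots> \<le> Re (\<alpha> (Suc j) c)" using ord[of j c] \<open>i \<le> j\<close> that a by simp
            finally show ?thesis .
          qed
        qed
      qed
    qed
    thus ?thesis using that by blast
  qed
  have sym: "Re (\<alpha> j c) + Re (\<alpha> (2*n+1-j) c) = 2 * m" if "1 \<le> j" "j \<le> 2*n" for j c
    using sym_re[of n "\<lambda>j. \<alpha> j c" c j, OF n1 roots mono that] by (simp add: m_def)
  have rootsP: "poly (Dpoly n c) (\<alpha> j c) = 0" if "j \<in> {1..2*n}" for j c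
  proof -
    have "\<alpha> j c \<in># proots (Dpoly n c)" unfolding roots[symmetric] using that by simp
    thus ?thesis using Dpoly_ne0[OF n1] by simp
  qed
  have rootsE: "\<exists>j\<in>{1..2*n}. \<alpha> j c = z" if "poly (Dpoly n c) z = 0" for z c
  proof -
    have "z \<in># proots (Dpoly n c)" using that Dpoly_ne0[OF n1] by simp
    thus ?thesis unfolding roots[symmetric] by auto
  qed
  have mid: "Re (\<alpha> n c) \<le> m \<and> m \<le> Re (\<alpha> (n+1) c)" for c
    using sym[of n c] mono[of n "n+1" c] n1 by (simp add: m_def)
  have partA: "\<exists>K. \<forall>c\<ge>K. Re (\<alpha> n c) < m - M \<and> Re (\<alpha> (n+1) c) > m + M" if M: "M > 0" for M
  proof -
    obtain K where K: "K > 0" "\<And>c z. K \<le> \<bar>c\<bar> \<Longrightarrow> poly (Dpoly n c) z = 0 \<Longrightarrow> \<bar>Re z - m\<bar> \<le> M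
           \<Longrightarrow> c < 0 \<and> Re z = m"
      using strip[OF n1 M] unfolding m_def by blast
    show ?thesis
    proof (intro exI[of _ K] allI impI)
      fix c assume c: "K \<le> c"
      have i: "n \<in> {1..2*n}" using n1 by auto
      have ca: "K \<le> \<bar>c\<bar>" using c K(1) by simp
      have "\<not> \<bar>Re (\<alpha> n c) - m\<bar> \<le> M"
      proof
        assume h: "\<bar>Re (\<alpha> n c) - m\<bar> \<le> M"
        have "c < 0" using K(2)[OF ca rootsP[OF i] h] by simp
        thus False using c K(1) by simp
      qed
      hence "Re (\<alpha> n c) < m - M" using mid[of c] by linarith
      moreover have "Re (\<alpha> (n+1) c) = 2 * m - Re (\<alpha> n c)" using sym[of n c] n1 by simp
      ultimately show "Re (\<alpha> n c) < m - M \<and> Re (\<alpha> (n+1) c) > m + M" by linarith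
    qed
  qed
  have partB: "\<exists>K. \<forall>c\<le>-K. Re (\<alpha> n c) = m \<and> Re (\<alpha> (n+1) c) = m \<and>
      (n \<ge> 2 \<longrightarrow> Re (\<alpha> (n-1) c) < m - M \<and> Re (\<alpha> (n+2) c) > m + M)" if M: "M > 0" for M
  proof -
    obtain K0 where K0: "K0 > 0" "\<And>c z. K0 \<le> \<bar>c\<bar> \<Longrightarrow> poly (Dpoly n c) z = 0 \<Longrightarrow> \<bar>Re z - m\<bar> \<le> M
           \<Longrightarrow> c < 0 \<and> Re z = m"
      using strip[OF n1 M] unfolding m_def by blast
    define K where "K = max K0 (QQ n 0)"
    have strip': "Re (\<alpha> j c) = m" if "c \<le> -K" "j \<in> {1..2*n}" "\<bar>Re (\<alpha> j c) - m\<bar> \<le> M" for c j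
    proof -
      have "K0 \<le> \<bar>c\<bar>" using that(1) K0(1) unfolding K_def by simp
      from K0(2)[OF this rootsP[OF that(2)] that(3)] show ?thesis by simp
    qed
    have center: "Re (\<alpha> n c) = m \<and> Re (\<alpha> (n+1) c) = m" if c: "c \<le> -K" for c
    proof -
      have cq: "c \<le> - QQ n 0" using c unfolding K_def by simp
      obtain z where z: "Re z = m" "poly (Dpoly n c) z = 0"
        using line_root_exists[OF n1 cq] unfolding m_def by blast
      obtain j where j: "j \<in> {1..2*n}" "\<alpha> j c = z" using rootsE[OF z(2)] by blast
      have rn: "Re (\<alpha> n c) = m"
      proof (rule ccontr)
        assume ne: "Re (\<alpha> n c) \<noteq> m"
        have "\<not> \<bar>Re (\<alpha> n c) - m\<bar> \<le> M" using strip'[OF c, of n] ne n1 by auto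
        hence lt: "Re (\<alpha> n c) < m - M" using mid[of c] by linarith
        have gt: "Re (\<alpha> (n+1) c) > m + M" using sym[of n c] n1 lt by simp
        show False
        proof (cases "j \<le> n")
          case True
          hence "Re (\<alpha> j c) \<le> Re (\<alpha> n c)" using mono[of j n c] j by simp
          thus False using lt z j M by simp
        next
          case False
          hence "Re (\<alpha> (n+1) c) \<le> Re (\<alpha> j c)" using mono[of "n+1" j c] j by simp
          thus False using gt z j M by simp
        qed
      qed
      moreover have "Re (\<alpha> (n+1) c) = m" using sym[of n c] n1 rn by simp
      ultimately show ?thesis by simp
    qed
    have left: "Re (\<alpha> (n-1) c) < m - M" if c: "c \<le> -K" and n2: "n \<ge> 2" for c
    proof (rule ccontr)
      assume nl: "\<not> Re (\<alpha> (n-1) c) < m - M"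
      have i1: "n - 1 \<in> {1..2*n}" using n2 by auto
      note nl
      moreover have "Re (\<alpha> (n-1) c) \<le> Re (\<alpha> n c)" using mono[of "n-1" n c] n2 by simp
      ultimately have "\<bar>Re (\<alpha> (n-1) c) - m\<bar> \<le> M" using center[OF c] M by simp
      hence c0: "Re (\<alpha> (n-1) c) = m" using strip'[OF c i1] by simp
      have contr: "continuous_on {a..b} (\<lambda>c. Re (\<alpha> (n-1) c))" for a b
        by (rule continuous_on_Re[OF continuous_on_subset[OF cont[OF i1]]]) simp
      have all: "Re (\<alpha> (n-1) c') = m" if c': "c' \<le> -K" for c'
      proof (rule ccontr)
        assume ne: "Re (\<alpha> (n-1) c') \<noteq> m"
        have "\<not> \<bar>Re (\<alpha> (n-1) c') - m\<bar> \<le> M" using strip'[OF c' i1] ne by auto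
        moreover have "Re (\<alpha> (n-1) c') \<le> Re (\<alpha> n c')" using mono[of "n-1" n c'] n2 by simp
        ultimately have lt: "Re (\<alpha> (n-1) c') < m - M" using center[OF c'] by linarith
        have y1: "Re (\<alpha> (n-1) c') \<le> m - M/2" using lt M by simp
        have y2: "m - M/2 \<le> Re (\<alpha> (n-1) c)" using c0 M by simp
        have "\<exists>x. x \<le> -K \<and> Re (\<alpha> (n-1) x) = m - M/2"
        proof (cases "c \<le> c'")
          case True
          obtain x where "c \<le> x" "x \<le> c'" "Re (\<alpha> (n-1) x) = m - M/2"
            using IVT2'[of "\<lambda>c. Re (\<alpha> (n-1) c)" c' "m - M/2" c, OF y1 y2 True contr] by blast
          thus ?thesis using c' by (intro exI[of _ x]) simp
        next
          case False
          hence le: "c' \<le> c" by simp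
          obtain x where "c' \<le> x" "x \<le> c" "Re (\<alpha> (n-1) x) = m - M/2"
            using IVT'[of "\<lambda>c. Re (\<alpha> (n-1) c)" c' "m - M/2" c, OF y1 y2 le contr] by blast
          thus ?thesis using c by (intro exI[of _ x]) simp
        qed
        then obtain x where x: "x \<le> -K" "Re (\<alpha> (n-1) x) = m - M/2" by blast
        have "\<bar>Re (\<alpha> (n-1) x) - m\<bar> \<le> M" using x(2) M by simp
        hence "Re (\<alpha> (n-1) x) = m" using strip'[OF x(1) i1] by blast
        thus False using x(2) M by simp
      qed
      obtain c2 where c2: "c2 \<le> -K" "c2 \<notin> {c. \<exists>z. poly (Dpoly n c) z = 0 \<and> poly (pderiv (Dpoly n c)) z = 0}"
        using generic_exists[OF bad_finite[OF n1], of K] by blast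
      have good: "\<not> (\<exists>z. poly (Dpoly n c2) z = 0 \<and> poly (pderiv (Dpoly n c2)) z = 0)" using c2(2) by simp
      have ind: "n - 1 \<in> {1..2*n}" "n \<in> {1..2*n}" "n + 1 \<in> {1..2*n}" using n2 by auto
      have d: "\<alpha> (n-1) c2 \<noteq> \<alpha> n c2" "\<alpha> (n-1) c2 \<noteq> \<alpha> (n+1) c2" "\<alpha> n c2 \<noteq> \<alpha> (n+1) c2"
      proof -
        have ne: "n - 1 \<noteq> n" "n - 1 \<noteq> n + 1" "n \<noteq> n + 1" using n2 by auto
        show "\<alpha> (n-1) c2 \<noteq> \<alpha> n c2" by (rule distinct_generic[OF n1 roots good ind(1) ind(2) ne(1)])
        show "\<alpha> (n-1) c2 \<noteq> \<alpha> (n+1) c2" by (rule distinct_generic[OF n1 roots good ind(1) ind(3) ne(2)])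
        show "\<alpha> n c2 \<noteq> \<alpha> (n+1) c2" by (rule distinct_generic[OF n1 roots good ind(2) ind(3) ne(3)])
      qed
      show False
      proof (rule three_line[OF n1 _ d])
        fix z assume "z \<in> {\<alpha> (n-1) c2, \<alpha> n c2, \<alpha> (n+1) c2}"
        moreover have "Re (\<alpha> (n-1) c2) = m" by (rule all[OF c2(1)])
        moreover have "Re (\<alpha> n c2) = m" "Re (\<alpha> (n+1) c2) = m" using center[OF c2(1)] by auto
        moreover have "poly (Dpoly n c2) (\<alpha> (n-1) c2) = 0" "poly (Dpoly n c2) (\<alpha> n c2) = 0"
          "poly (Dpoly n c2) (\<alpha> (n+1) c2) = 0" using rootsP[OF ind(1)] rootsP[OF ind(2)] rootsP[OF ind(3)] by auto
        ultimately show "Re z = real n - 1/2 \<and> poly (Dpoly n c2) z = 0"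
          unfolding m_def by blast
      qed
    qed
    show ?thesis
    proof (intro exI[of _ K] allI impI conjI)
      fix c assume c: "c \<le> -K"
      show "Re (\<alpha> n c) = m" "Re (\<alpha> (n+1) c) = m" using center[OF c] by auto
      assume n2: "n \<ge> 2"
      show "Re (\<alpha> (n-1) c) < m - M" using left[OF c n2] .
      have i1: "1 \<le> n - 1" "n - 1 \<le> 2*n" using n2 by auto
      have e: "2*n+1-(n-1) = n+2" using n2 by auto
      have "Re (\<alpha> (n-1) c) + Re (\<alpha> (n+2) c) = 2 * m" using sym[OF i1, of c] unfolding e .
      hence "Re (\<alpha> (n+2) c) = 2 * m - Re (\<alpha> (n-1) c)" by simp
      thus "Re (\<alpha> (n+2) c) > m + M" using left[OF c n2] by simp
    qed
  qed
  have mpos: "(0::real) < max 1 u" for u by (simp add: less_max_iff_disj)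
  show ?thesis
  proof (intro conjI ballI impI)
    fix j assume j: "j \<in> {1..n}"
    show "filterlim (\<lambda>c. Re (\<alpha> j c)) at_bot at_top"
      unfolding filterlim_at_bot
    proof
      fix Z :: real
      obtain K where K: "\<forall>c\<ge>K. Re (\<alpha> n c) < m - max 1 (m - Z) \<and> Re (\<alpha> (n+1) c) > m + max 1 (m - Z)"
        using partA[OF mpos[of "m - Z"]] by blast
      show "eventually (\<lambda>c. Re (\<alpha> j c) \<le> Z) at_top"
        using eventually_ge_at_top[of K]
      proof (rule eventually_mono)
        fix c assume "K \<le> c"
        hence "Re (\<alpha> n c) < m - max 1 (m - Z)" using K by blast
        moreover have "Re (\<alpha> j c) \<le> Re (\<alpha> n c)" using mono[of j n c] j by auto
        ultimately show "Re (\<alpha> j c) \<le> Z" by linarith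
      qed
    qed
  next
    fix j assume j: "j \<in> {n+1..2*n}"
    show "filterlim (\<lambda>c. Re (\<alpha> j c)) at_top at_top"
      unfolding filterlim_at_top
    proof
      fix Z :: real
      obtain K where K: "\<forall>c\<ge>K. Re (\<alpha> n c) < m - max 1 (Z - m) \<and> Re (\<alpha> (n+1) c) > m + max 1 (Z - m)"
        using partA[OF mpos[of "Z - m"]] by blast
      show "eventually (\<lambda>c. Z \<le> Re (\<alpha> j c)) at_top"
        using eventually_ge_at_top[of K]
      proof (rule eventually_mono)
        fix c assume "K \<le> c"
        hence "Re (\<alpha> (n+1) c) > m + max 1 (Z - m)" using K by blast
        moreover have "Re (\<alpha> (n+1) c) \<le> Re (\<alpha> j c)" using mono[of "n+1" j c] j by auto
        ultimately show "Z \<le> Re (\<alpha> j c)" by linarith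
      qed
    qed
  next
    fix j assume j: "j \<in> {1..n-1}"
    hence n2: "n \<ge> 2" by auto
    show "filterlim (\<lambda>c. Re (\<alpha> j c)) at_bot at_bot"
      unfolding filterlim_at_bot
    proof
      fix Z :: real
      obtain K where K: "\<forall>c\<le>-K. Re (\<alpha> n c) = m \<and> Re (\<alpha> (n+1) c) = m \<and>
          (n \<ge> 2 \<longrightarrow> Re (\<alpha> (n-1) c) < m - max 1 (m - Z) \<and> Re (\<alpha> (n+2) c) > m + max 1 (m - Z))"
        using partB[OF mpos[of "m - Z"]] by blast
      show "eventually (\<lambda>c. Re (\<alpha> j c) \<le> Z) at_bot"
        using eventually_le_at_bot[of "-K"]
      proof (rule eventually_mono)
        fix c assume "c \<le> -K"
        hence "Re (\<alpha> (n-1) c) < m - max 1 (m - Z)" using K n2 by blast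
        moreover have "Re (\<alpha> j c) \<le> Re (\<alpha> (n-1) c)" using mono[of j "n-1" c] j by auto
        ultimately show "Re (\<alpha> j c) \<le> Z" by linarith
      qed
    qed
  next
    fix j assume j: "j \<in> {n..n+1}" and "1 \<le> j \<and> j \<le> 2*n"
    obtain K where K: "\<forall>c\<le>-K. Re (\<alpha> n c) = m \<and> Re (\<alpha> (n+1) c) = m \<and>
          (n \<ge> 2 \<longrightarrow> Re (\<alpha> (n-1) c) < m - 1 \<and> Re (\<alpha> (n+2) c) > m + 1)"
      using partB[OF zero_less_one] by blast
    have "eventually (\<lambda>c. Re (\<alpha> j c) = m) at_bot"
      using eventually_le_at_bot[of "-K"]
    proof (rule eventually_mono)
      fix c assume "c \<le> -K"
      hence "Re (\<alpha> n c) = m \<and> Re (\<alpha> (n+1) c) = m" using K by blast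
      moreover have "j = n \<or> j = n + 1" using j by auto
      ultimately show "Re (\<alpha> j c) = m" by auto
    qed
    thus "((\<lambda>c. Re (\<alpha> j c)) \<longlongrightarrow> real n - 1/2) at_bot"
      unfolding m_def by (rule tendsto_eventually)
  next
    fix j assume j: "j \<in> {n+2..2*n}"
    hence n2: "n \<ge> 2" by auto
    show "filterlim (\<lambda>c. Re (\<alpha> j c)) at_top at_bot"
      unfolding filterlim_at_top
    proof
      fix Z :: real
      obtain K where K: "\<forall>c\<le>-K. Re (\<alpha> n c) = m \<and> Re (\<alpha> (n+1) c) = m \<and>
          (n \<ge> 2 \<longrightarrow> Re (\<alpha> (n-1) c) < m - max 1 (Z - m) \<and> Re (\<alpha> (n+2) c) > m + max 1 (Z - m))"
        using partB[OF mpos[of "Z - m"]] by blast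
      show "eventually (\<lambda>c. Z \<le> Re (\<alpha> j c)) at_bot"
        using eventually_le_at_bot[of "-K"]
      proof (rule eventually_mono)
        fix c assume "c \<le> -K"
        hence "Re (\<alpha> (n+2) c) > m + max 1 (Z - m)" using K n2 by blast
        moreover have "Re (\<alpha> (n+2) c) \<le> Re (\<alpha> j c)" using mono[of "n+2" j c] j by auto
        ultimately show "Z \<le> Re (\<alpha> j c)" by linarith
      qed
    qed
  qed
qed
end
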